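(* Let $n\ge1$, let $\Delta\subset\mathbb{R}^n$ be an $n$-simplex with vertices $\mathbf{x}_0,\dots,\mathbf{x}_n$ and barycenter $\mathbf{b}=\frac{1}{n+1}(\mathbf{x}_0+\dots+\mathbf{x}_n)$. Then for every convex $f\colon\Delta\to\mathbb{R}$, $$\operatorname{Avg}(f,\Delta)\le \frac{1}{n+1}f(\mathbf{b})+\frac{n}{n+1}\cdot\frac{f(\mathbf{x}_0)+\dots+f(\mathbf{x}_n)}{n+1}.$$
   Context: $\mathbf{x}_0,\dots,\mathbf{x}_n\in\mathbb{R}^n$ are affinely independent and $\Delta=\operatorname{conv}\{\mathbf{x}_0,\dots,\mathbf{x}_n\}$. $\operatorname{Avg}(f,\Delta)=\frac{1}{\operatorname{Vol}_n(\Delta)}\int_\Delta f(\mathbf{x})\,d\mathbf{x}$ (Lebesgue measure on $\mathbb{R}^n$). *)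

theory Defs
  imports "HOL-Analysis.Analysis"
begin

definition Avg :: "('a::euclidean_space \<Rightarrow> real) \<Rightarrow> 'a set \<Rightarrow> real" where
  "Avg f S = integral S f / measure lebesgue S"

end

theory Submission
  imports Defs
begin


lemma cont_int:
  fixes g :: "'a::euclidean_space \<Rightarrow> real"
  assumes "continuous_on K g" "compact K"
  shows "g integrable_on K"
proof -
  have "bounded (g ` K)" using assms compact_continuous_image compact_imp_bounded by blast
  then obtain B where B: "\<forall>x\<in>K. norm (g x) \<le> B" by (auto simp: bounded_iff)
  have KL: "K \<in> sets lebesgue" using assms(2) lmeasurable_compact fmeasurableD by blast
  have "g absolutely_integrable_on K"
    by (rule measurable_bounded_by_integrable_imp_absolutely_integrable[where g="\<lambda>_. B"])
      (use assms B KL in \<open>auto intro: continuous_imp_measurable_on_sets_lebesgue lmeasurable_compact integrable_on_const\<close>)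
  then show ?thesis using set_lebesgue_integral_eq_integral(1) by blast
qed

lemma scale_has_integral:
  fixes \<phi> :: "'a::euclidean_space \<Rightarrow> real"
  assumes phi: "(\<phi> has_integral I) K" and bK: "bounded K" and s: "0 < s"
  shows "((\<lambda>x. \<phi> (p + (1/s) *\<^sub>R (x - p))) has_integral (s ^ DIM('a) * I)) ((\<lambda>w. p + s *\<^sub>R (w - p)) ` K)"
proof -
  obtain a b where Kab: "K \<subseteq> cbox a b" using bK bounded_subset_cbox_symmetric by metis
  define F where "F x = (if x \<in> K then \<phi> x else 0)" for x
  have F: "(F has_integral I) (cbox a b)" unfolding F_def using phi Kab by simp
  have "1/s \<noteq> 0" using s by simp
  from has_integral_affinity[OF F this, of "p - (1/s) *\<^sub>R p"]
  have H: "((\<lambda>x. F ((1/s) *\<^sub>R x + (p - (1/s) *\<^sub>R p))) has_integral (s ^ DIM('a) * I))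
     ((\<lambda>x. s *\<^sub>R x + (p - s *\<^sub>R p)) ` cbox a b)"
    using s by (simp add: algebra_simps power_one_over)
  have e1: "(\<lambda>x. s *\<^sub>R x + (p - s *\<^sub>R p)) = (\<lambda>w. p + s *\<^sub>R (w - p))"
    by (auto simp: algebra_simps)
  have inv: "(1/s) *\<^sub>R x + (p - (1/s) *\<^sub>R p) \<in> K \<longleftrightarrow> x \<in> (\<lambda>w. p + s *\<^sub>R (w - p)) ` K" for x
  proof
    assume "(1/s) *\<^sub>R x + (p - (1/s) *\<^sub>R p) \<in> K"
    moreover have "x = p + s *\<^sub>R (((1/s) *\<^sub>R x + (p - (1/s) *\<^sub>R p)) - p)"
      using s by (simp add: algebra_simps)
    ultimately show "x \<in> (\<lambda>w. p + s *\<^sub>R (w - p)) ` K" by blast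
  next
    assume "x \<in> (\<lambda>w. p + s *\<^sub>R (w - p)) ` K"
    then obtain w where "w \<in> K" "x = p + s *\<^sub>R (w - p)" by blast
    moreover have "(1/s) *\<^sub>R (p + s *\<^sub>R (w - p)) + (p - (1/s) *\<^sub>R p) = w"
      using s by (simp add: algebra_simps)
    ultimately show "(1/s) *\<^sub>R x + (p - (1/s) *\<^sub>R p) \<in> K" by simp
  qed
  have e2: "(\<lambda>x. F ((1/s) *\<^sub>R x + (p - (1/s) *\<^sub>R p))) =
     (\<lambda>x. if x \<in> (\<lambda>w. p + s *\<^sub>R (w - p)) ` K then \<phi> (p + (1/s) *\<^sub>R (x - p)) else 0)"
    unfolding F_def using inv by (auto simp: algebra_simps)
  have sub: "(\<lambda>w. p + s *\<^sub>R (w - p)) ` K \<subseteq> (\<lambda>w. p + s *\<^sub>R (w - p)) ` cbox a b"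
    using Kab by blast
  show ?thesis using H unfolding e1 e2 using has_integral_restrict[OF sub] by blast
qed

lemma gauge_integral:
  fixes K :: "'a::euclidean_space set" and g :: "'a \<Rightarrow> real"
  assumes bK: "bounded K"
    and gi: "(g has_integral I) K"
    and oi: "((\<lambda>x. 1::real) has_integral V) K"
    and img: "\<And>s. 0 < s \<Longrightarrow> s < 1 \<Longrightarrow> (\<lambda>w. p + s *\<^sub>R (w - p)) ` K = {y\<in>K. g y \<le> s}"
    and hom: "\<And>s y. 0 < s \<Longrightarrow> s < 1 \<Longrightarrow> y \<in> K \<Longrightarrow> g (p + s *\<^sub>R (y - p)) = s * g y"
    and rng: "\<And>y. y \<in> K \<Longrightarrow> 0 \<le> g y \<and> g y \<le> 1"
  shows "(real DIM('a) + 1) * I = real DIM('a) * V"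
proof -
  define n where "n = DIM('a)"
  have ineq: "s * V * (1 - s^n) \<le> I * (1 - s^(Suc n)) \<and> I * (1 - s^(Suc n)) \<le> V * (1 - s^n)"
    if s: "0 < s" "s < 1" for s
  proof -
    define Ks where "Ks = (\<lambda>w. p + s *\<^sub>R (w - p)) ` K"
    have Ks: "Ks = {y\<in>K. g y \<le> s}" using img[OF s] Ks_def by simp
    have bk: "g (p + (1/s) *\<^sub>R (x - p)) = g x / s" if "x \<in> Ks" for x
    proof -
      obtain w where w: "w \<in> K" "x = p + s *\<^sub>R (w - p)" using \<open>x \<in> Ks\<close> Ks_def by blast
      have "p + (1/s) *\<^sub>R (x - p) = w" using s unfolding w(2) by simp
      then show ?thesis using hom[OF s w(1)] w s by simp
    qed
    have g1: "((\<lambda>x. g (p + (1/s) *\<^sub>R (x - p))) has_integral (s^n * I)) Ks"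
      using scale_has_integral[OF gi bK s(1), of p] unfolding Ks_def n_def .
    have g2: "((\<lambda>x. g x / s) has_integral (s^n * I)) Ks"
      using has_integral_spike_eq[of "{}" Ks "(\<lambda>x. g (p + (1/s) *\<^sub>R (x - p)))" "(\<lambda>x. g x / s)"] g1 bk
      by auto
    have gKs: "(g has_integral (s^(Suc n) * I)) Ks"
      using has_integral_mult_right[OF g2, of s] s by (simp add: mult_ac)
    have oKs: "((\<lambda>x. 1::real) has_integral (s^n * V)) Ks"
      using scale_has_integral[OF oi bK s(1), of p] unfolding Ks_def n_def by simp
    have sub: "Ks \<subseteq> K" using Ks by blast
    have gD: "(g has_integral (I - s^(Suc n) * I)) (K - Ks)"
      by (rule has_integral_setdiff[OF gi gKs]) (use sub in auto)
    have oD: "((\<lambda>x. 1::real) has_integral (V - s^n * V)) (K - Ks)"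
      by (rule has_integral_setdiff[OF oi oKs]) (use sub in auto)
    have sD: "((\<lambda>x. s) has_integral (s * (V - s^n * V))) (K - Ks)"
      using has_integral_mult_right[OF oD, of s] by simp
    have "s * (V - s^n * V) \<le> I - s^(Suc n) * I"
      by (rule has_integral_le[OF sD gD]) (use Ks in auto)
    moreover have "I - s^(Suc n) * I \<le> V - s^n * V"
      by (rule has_integral_le[OF gD oD]) (use rng in auto)
    ultimately show ?thesis by (simp add: algebra_simps)
  qed
  define P where "P s = (\<Sum>i<Suc n. s^i)" for s :: real
  define Q where "Q s = (\<Sum>i<n. s^i)" for s :: real
  have ineq2: "s * V * Q s \<le> I * P s \<and> I * P s \<le> V * Q s" if s: "0 < s" "s < 1" for s
  proof -
    have e1: "1 - s^k = (1 - s) * (\<Sum>i<k. s^i)" for k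
      by (simp add: one_diff_power_eq)
    have "0 < 1 - s" using s by simp
    then show ?thesis using ineq[OF s] unfolding e1 P_def Q_def
      by (smt (verit) mult.assoc mult.commute mult_le_cancel_left_pos)
  qed
  have lP: "((\<lambda>s. I * P s) \<longlongrightarrow> I * P 1) (at_left 1)"
    unfolding P_def by (intro tendsto_intros)
  have lQ: "((\<lambda>s. V * Q s) \<longlongrightarrow> V * Q 1) (at_left 1)"
    unfolding Q_def by (intro tendsto_intros)
  have lQ': "((\<lambda>s. s * V * Q s) \<longlongrightarrow> 1 * V * Q 1) (at_left 1)"
    unfolding Q_def by (intro tendsto_intros)
  have ev: "eventually (\<lambda>s. 0 < s \<and> s < (1::real)) (at_left 1)"
    using eventually_at_left_real[of 0 "1::real"] by simp
  have "I * P 1 \<le> V * Q 1"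
    by (rule tendsto_le[OF trivial_limit_at_left_real lQ lP]) (use ev ineq2 in \<open>auto elim: eventually_mono\<close>)
  moreover have "1 * V * Q 1 \<le> I * P 1"
    by (rule tendsto_le[OF trivial_limit_at_left_real lP lQ']) (use ev ineq2 in \<open>auto elim: eventually_mono\<close>)
  ultimately have "I * P 1 = V * Q 1" by simp
  then show ?thesis unfolding P_def Q_def n_def by (simp add: algebra_simps)
qed



lemma bary_ex:
  fixes x :: "nat \<Rightarrow> 'a::euclidean_space"
  assumes ind: "\<not> affine_dependent (x ` {..N})" and inj: "inj_on x {..N}" and dim: "DIM('a) = N"
  shows "\<exists>u. sum u {..N} = 1 \<and> (\<Sum>j\<le>N. u j *\<^sub>R x j) = y"
proof -
  have c: "card (x ` {..N}) = Suc N" using card_image[OF inj] by simp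
  have "aff_dim (x ` {..N}) = int DIM('a)"
    using aff_dim_affine_independent[OF ind] c dim by simp
  then have "affine hull (x ` {..N}) = UNIV" using aff_dim_eq_full by blast
  then have "y \<in> affine hull (x ` {..N})" by simp
  then obtain u where u: "sum u (x ` {..N}) = 1" "(\<Sum>v\<in>x ` {..N}. u v *\<^sub>R v) = y"
    using affine_hull_finite[of "x ` {..N}"] by auto
  have "sum (u \<circ> x) {..N} = 1" using u(1) sum.reindex[OF inj, of u] by simp
  moreover have "(\<Sum>j\<le>N. (u \<circ> x) j *\<^sub>R x j) = y"
    using u(2) sum.reindex[OF inj, of "\<lambda>v. u v *\<^sub>R v"] by simp
  ultimately show ?thesis by blast
qed

lemma bary_uniq:
  fixes x :: "nat \<Rightarrow> 'a::euclidean_space"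
  assumes ind: "\<not> affine_dependent (x ` {..N})" and inj: "inj_on x {..N}"
    and su: "sum u {..N} = sum v {..N}"
    and sx: "(\<Sum>j\<le>N. u j *\<^sub>R x j) = (\<Sum>j\<le>N. v j *\<^sub>R x j)"
    and j: "j \<le> N"
  shows "u j = v j"
proof (rule ccontr)
  assume ne: "u j \<noteq> v j"
  define U where "U z = u (inv_into {..N} x z) - v (inv_into {..N} x z)" for z
  have Ux: "U (x k) = u k - v k" if "k \<le> N" for k
    using inv_into_f_f[OF inj] that U_def by simp
  have "sum U (x ` {..N}) = (\<Sum>k\<le>N. u k - v k)"
    using sum.reindex[OF inj, of U] Ux by simp
  also have "\<dots> = 0" using su by (simp add: sum_subtractf)
  finally have s1: "sum U (x ` {..N}) = 0" .
  have "(\<Sum>z\<in>x ` {..N}. U z *\<^sub>R z) = (\<Sum>k\<le>N. (u k - v k) *\<^sub>R x k)"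
    using sum.reindex[OF inj, of "\<lambda>z. U z *\<^sub>R z"] Ux by simp
  also have "\<dots> = 0" using sx by (simp add: scaleR_diff_left sum_subtractf)
  finally have s2: "(\<Sum>z\<in>x ` {..N}. U z *\<^sub>R z) = 0" .
  have "x j \<in> x ` {..N}" "U (x j) \<noteq> 0" using j ne Ux by auto
  then have "affine_dependent (x ` {..N})"
    using affine_dependent_explicit_finite[of "x ` {..N}"] s1 s2 by blast
  then show False using ind by simp
qed

fun mm :: "(nat \<Rightarrow> real) \<Rightarrow> nat \<Rightarrow> real" where
  "mm u 0 = u 0"
| "mm u (Suc k) = min (mm u k) (u (Suc k))"

lemma mm_le: "j \<le> k \<Longrightarrow> mm u k \<le> u j"
  by (induction k) (auto simp: le_Suc_eq)

lemma mm_ge_iff: "t \<le> mm u k \<longleftrightarrow> (\<forall>j\<le>k. t \<le> u j)"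
  by (induction k) (auto simp: le_Suc_eq)

lemma mm_affine: "0 \<le> s \<Longrightarrow> mm (\<lambda>j. c + s * u j) k = c + s * mm u k"
  by (induction k) (simp_all add: min_add_distrib_left min_mult_distrib_left)

lemma mm_cong: "(\<And>j. j \<le> k \<Longrightarrow> u j = v j) \<Longrightarrow> mm u k = mm v k"
  by (induction k) auto

lemma mm_sum: "real (Suc k) * mm u k \<le> (\<Sum>j\<le>k. u j)"
proof -
  have "(\<Sum>j\<le>k. mm u k) \<le> (\<Sum>j\<le>k. u j)" by (rule sum_mono) (simp add: mm_le)
  then show ?thesis by simp
qed

lemma mm_cont: "(\<And>j. continuous_on S (\<lambda>y. F y j)) \<Longrightarrow> continuous_on S (\<lambda>y. mm (F y) k)"
  by (induction k) (auto intro: continuous_on_min)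



lemma alg0:
  fixes V c S F :: real
  assumes "0 < V" "0 < c"
  shows "(V / c * S - V / c^2 * S + c * F * (V / c^2)) / V
    = 1 / c * F + (c - 1) / c * (S / c)"
  using assms by (simp add: field_simps power2_eq_square)
lemma alg:
  fixes V n S F :: real
  assumes "0 < V" "0 \<le> n"
  shows "(V / (n + 1) * S - V / (n + 1)^2 * S + (n + 1) * F * (V / (n + 1)^2)) / V
    = 1 / (n + 1) * F + n / (n + 1) * (S / (n + 1))"
  using alg0[of V "n+1" S F] assms by simp

lemma convex_bounded_integrable:
  fixes f :: "'a::euclidean_space \<Rightarrow> real"
  assumes cvx: "convex_on D f" and cD: "convex D" and kD: "compact D" and B: "\<And>y. y \<in> D \<Longrightarrow> \<bar>f y\<bar> \<le> B"
  shows "f integrable_on D"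
proof -
  have ci: "continuous_on (interior D) f"
    by (rule convex_on_continuous[OF open_interior convex_on_subset[OF cvx interior_subset convex_interior[OF cD]]])
  have li: "interior D \<in> lmeasurable"
    by (rule lmeasurable_open) (use kD compact_imp_bounded bounded_interior in auto)
  have "f absolutely_integrable_on (interior D)"
    by (rule measurable_bounded_by_integrable_imp_absolutely_integrable[where g="\<lambda>_. B"])
      (use ci li B interior_subset in \<open>auto intro: continuous_imp_measurable_on_sets_lebesgue integrable_on_const fmeasurableD\<close>)
  then have fi: "f integrable_on (interior D)" using set_lebesgue_integral_eq_integral(1) by blast
  have neg: "negligible (frontier D)" by (rule negligible_convex_frontier[OF cD])
  show ?thesis
  proof (rule integrable_spike_set[OF fi])
    have e: "{x \<in> interior D - D. f x \<noteq> 0} = {}" using interior_subset by blast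
    show "negligible {x \<in> interior D - D. f x \<noteq> 0}" unfolding e by (rule negligible_empty)
    have "{x \<in> D - interior D. f x \<noteq> 0} \<subseteq> frontier D"
      using closure_subset by (auto simp: frontier_def)
    then show "negligible {x \<in> D - interior D. f x \<noteq> 0}" using neg negligible_subset by blast
  qed
qed

theorem theorem8:
  fixes x :: "nat \<Rightarrow> real ^ 'n" and f :: "real ^ 'n \<Rightarrow> real"
  assumes inj: "inj_on x {..CARD('n)}"
    and indep: "\<not> affine_dependent (x ` {..CARD('n)})"
    and cvx: "convex_on (convex hull (x ` {..CARD('n)})) f"
  shows "Avg f (convex hull (x ` {..CARD('n)}))
    \<le> 1 / (real CARD('n) + 1) * f ((1 / (real CARD('n) + 1)) *\<^sub>R (\<Sum>i\<le>CARD('n). x i))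
      + real CARD('n) / (real CARD('n) + 1) * ((\<Sum>i\<le>CARD('n). f (x i)) / (real CARD('n) + 1))"
proof -
  define N where "N = CARD('n)"
  have dim: "DIM(real^'n) = N" by (simp add: N_def)
  have N1: "1 \<le> N" unfolding N_def by simp
  have inj': "inj_on x {..N}" and ind: "\<not> affine_dependent (x ` {..N})"
    using inj indep by (simp_all add: N_def)
  define bc0 where "bc0 y = (SOME u. sum u {..N} = 1 \<and> (\<Sum>j\<le>N. u j *\<^sub>R x j) = y)" for y
  define bc where "bc y j = (if j \<le> N then bc0 y j else 0)" for y j
  have bcp: "sum (bc y) {..N} = 1 \<and> (\<Sum>j\<le>N. bc y j *\<^sub>R x j) = y" for y
  proof -
    have "sum (bc0 y) {..N} = 1 \<and> (\<Sum>j\<le>N. bc0 y j *\<^sub>R x j) = y"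
      unfolding bc0_def by (rule someI_ex[OF bary_ex[OF ind inj' dim]])
    moreover have "sum (bc y) {..N} = sum (bc0 y) {..N}" "(\<Sum>j\<le>N. bc y j *\<^sub>R x j) = (\<Sum>j\<le>N. bc0 y j *\<^sub>R x j)"
      unfolding bc_def by (auto intro: sum.cong)
    ultimately show ?thesis by simp
  qed
  have bceq: "bc y j = u j" if "sum u {..N} = 1" "(\<Sum>j\<le>N. u j *\<^sub>R x j) = y" "j \<le> N" for u y j
    using bary_uniq[OF ind inj', of "bc y" u j] bcp[of y] that by simp
  have bcaff: "bc (a *\<^sub>R y + (1-a) *\<^sub>R z) j = a * bc y j + (1-a) * bc z j" if "j \<le> N" for a y z j
  proof (rule bceq[OF _ _ that])
    show "(\<Sum>j\<le>N. a * bc y j + (1 - a) * bc z j) = 1"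
      using bcp[of y] bcp[of z] by (simp add: sum.distrib sum_distrib_left[symmetric])
    show "(\<Sum>j\<le>N. (a * bc y j + (1 - a) * bc z j) *\<^sub>R x j) = a *\<^sub>R y + (1 - a) *\<^sub>R z"
    proof -
      have "a *\<^sub>R y + (1 - a) *\<^sub>R z = a *\<^sub>R (\<Sum>j\<le>N. bc y j *\<^sub>R x j) + (1 - a) *\<^sub>R (\<Sum>j\<le>N. bc z j *\<^sub>R x j)"
        using bcp[of y] bcp[of z] by simp
      then show ?thesis by (simp add: sum.distrib scaleR_add_left scaleR_sum_right)
    qed
  qed
  have bcform: "bc y j = (1 - (\<Sum>b\<in>Basis. y \<bullet> b)) * bc 0 j + (\<Sum>b\<in>Basis. (y \<bullet> b) * bc b j)" for y j
  proof (cases "j \<le> N")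
    case True
    show ?thesis
    proof (rule bceq[OF _ _ True])
      have sw: "(\<Sum>j\<le>N. \<Sum>b\<in>Basis. (y \<bullet> b) * bc b j) = (\<Sum>b\<in>Basis. \<Sum>j\<le>N. (y \<bullet> b) * bc b j)"
        by (rule sum.swap)
      also have "\<dots> = (\<Sum>b\<in>Basis. (y \<bullet> b))" using bcp by (simp add: sum_distrib_left[symmetric])
      finally have sw': "(\<Sum>j\<le>N. \<Sum>b\<in>Basis. (y \<bullet> b) * bc b j) = (\<Sum>b\<in>Basis. (y \<bullet> b))" .
      show "(\<Sum>j\<le>N. (1 - (\<Sum>b\<in>Basis. y \<bullet> b)) * bc 0 j + (\<Sum>b\<in>Basis. (y \<bullet> b) * bc b j)) = 1"
        using bcp[of 0] by (simp add: sum.distrib sw' sum_distrib_left[symmetric])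
      have "(\<Sum>j\<le>N. ((1 - (\<Sum>b\<in>Basis. y \<bullet> b)) * bc 0 j + (\<Sum>b\<in>Basis. (y \<bullet> b) * bc b j)) *\<^sub>R x j)
          = (1 - (\<Sum>b\<in>Basis. y \<bullet> b)) *\<^sub>R (\<Sum>j\<le>N. bc 0 j *\<^sub>R x j) + (\<Sum>b\<in>Basis. (y \<bullet> b) *\<^sub>R (\<Sum>j\<le>N. bc b j *\<^sub>R x j))"
      proof -
        have "(\<Sum>j\<le>N. (\<Sum>b\<in>Basis. (y \<bullet> b) * bc b j) *\<^sub>R x j) = (\<Sum>j\<le>N. \<Sum>b\<in>Basis. (y \<bullet> b) *\<^sub>R (bc b j *\<^sub>R x j))"
          by (simp add: scaleR_sum_left)
        also have "\<dots> = (\<Sum>b\<in>Basis. \<Sum>j\<le>N. (y \<bullet> b) *\<^sub>R (bc b j *\<^sub>R x j))" by (rule sum.swap)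
        also have "\<dots> = (\<Sum>b\<in>Basis. (y \<bullet> b) *\<^sub>R (\<Sum>j\<le>N. bc b j *\<^sub>R x j))" by (simp add: scaleR_sum_right)
        finally have e: "(\<Sum>j\<le>N. (\<Sum>b\<in>Basis. (y \<bullet> b) * bc b j) *\<^sub>R x j) = (\<Sum>b\<in>Basis. (y \<bullet> b) *\<^sub>R (\<Sum>j\<le>N. bc b j *\<^sub>R x j))" .
        have "(\<Sum>j\<le>N. ((1 - (\<Sum>b\<in>Basis. y \<bullet> b)) * bc 0 j + (\<Sum>b\<in>Basis. (y \<bullet> b) * bc b j)) *\<^sub>R x j)
           = (\<Sum>j\<le>N. (1 - (\<Sum>b\<in>Basis. y \<bullet> b)) *\<^sub>R (bc 0 j *\<^sub>R x j)) + (\<Sum>j\<le>N. (\<Sum>b\<in>Basis. (y \<bullet> b) * bc b j) *\<^sub>R x j)"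
          by (simp add: scaleR_add_left sum.distrib)
        then show ?thesis unfolding e by (simp add: scaleR_sum_right)
      qed
      also have "\<dots> = y" using bcp by (simp add: euclidean_representation)
      finally show "(\<Sum>j\<le>N. ((1 - (\<Sum>b\<in>Basis. y \<bullet> b)) * bc 0 j + (\<Sum>b\<in>Basis. (y \<bullet> b) * bc b j)) *\<^sub>R x j) = y" .
    qed
  next
    case False then show ?thesis by (simp add: bc_def)
  qed
  have bccont: "continuous_on UNIV (\<lambda>y. bc y j)" for j
    by (subst bcform) (intro continuous_intros)
  define D where "D = convex hull (x ` {..N})"
  have finS: "finite (x ` {..N})" by simp
  have Dchar: "y \<in> D \<longleftrightarrow> (\<forall>j\<le>N. 0 \<le> bc y j)" for y
  proof
    assume "y \<in> D"
    then obtain u where u: "\<forall>z\<in>x ` {..N}. 0 \<le> u z" "sum u (x ` {..N}) = 1" "(\<Sum>z\<in>x ` {..N}. u z *\<^sub>R z) = y"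
      unfolding D_def convex_hull_finite[OF finS] by blast
    have s1: "sum (u \<circ> x) {..N} = 1" using u(2) sum.reindex[OF inj', of u] by simp
    have s2: "(\<Sum>j\<le>N. (u \<circ> x) j *\<^sub>R x j) = y" using u(3) sum.reindex[OF inj', of "\<lambda>z. u z *\<^sub>R z"] by simp
    show "\<forall>j\<le>N. 0 \<le> bc y j" using bceq[OF s1 s2] u(1) by simp
  next
    assume nn: "\<forall>j\<le>N. 0 \<le> bc y j"
    define u where "u z = bc y (inv_into {..N} x z)" for z
    have ux: "u (x j) = bc y j" if "j \<le> N" for j using inv_into_f_f[OF inj'] that u_def by simp
    have "\<forall>z\<in>x ` {..N}. 0 \<le> u z" using nn ux by auto
    moreover have "sum u (x ` {..N}) = 1" using sum.reindex[OF inj', of u] ux bcp[of y] by simp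
    moreover have "(\<Sum>z\<in>x ` {..N}. u z *\<^sub>R z) = y" using sum.reindex[OF inj', of "\<lambda>z. u z *\<^sub>R z"] ux bcp[of y] by simp
    ultimately show "y \<in> D" unfolding D_def convex_hull_finite[OF finS] by blast
  qed
  have bcx: "bc (x i) j = (if j = i then 1 else 0)" if "i \<le> N" "j \<le> N" for i j
  proof (rule bceq[OF _ _ that(2)])
    show "(\<Sum>k\<le>N. if k = i then 1 else 0) = (1::real)" using that by simp
    have "(\<Sum>k\<le>N. (if k = i then 1 else 0) *\<^sub>R x k) = (\<Sum>k\<le>N. if k = i then x k else 0)"
      by (rule sum.cong) auto
    then show "(\<Sum>k\<le>N. (if k = i then 1 else 0) *\<^sub>R x k) = x i" using that by simp
  qed
  define bb where "bb = (1 / (real N + 1)) *\<^sub>R (\<Sum>i\<le>N. x i)"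
  have bcb: "bc bb j = 1 / (real N + 1)" if "j \<le> N" for j
    by (rule bceq[OF _ _ that]) (auto simp: bb_def scaleR_sum_right)
  have bch: "bc (p + s *\<^sub>R (y - p)) j = (1 - s) * bc p j + s * bc y j" if "j \<le> N" for p s y j
  proof -
    have "p + s *\<^sub>R (y - p) = s *\<^sub>R y + (1 - s) *\<^sub>R p" by (simp add: algebra_simps)
    then show ?thesis using bcaff[OF that, of s y p] by simp
  qed
  have bcle1: "bc y j \<le> 1" if "y \<in> D" "j \<le> N" for y j
  proof -
    have "bc y j \<le> sum (bc y) {..N}"
      by (rule member_le_sum) (use that Dchar in auto)
    then show ?thesis using bcp[of y] by simp
  qed
  have cD: "compact D" unfolding D_def by (rule compact_convex_hull[OF finite_imp_compact[OF finS]])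
  then have bD: "bounded D" and lD: "D \<in> lmeasurable" by (auto intro: compact_imp_bounded lmeasurable_compact)
  define V where "V = measure lebesgue D"
  have oi: "((\<lambda>x. 1::real) has_integral V) D"
    using integrable_on_const[OF lD] lmeasure_integral[OF lD] V_def by (metis has_integral_integral)
  have gint: "(g has_integral integral D g) D" if "continuous_on UNIV g" for g :: "real^'n \<Rightarrow> real"
    using cont_int[OF continuous_on_subset[OF that] cD] by (simp add: has_integral_integral)
  have intbc: "integral D (\<lambda>y. bc y j) = V / (real N + 1)" if j: "j \<le> N" for j
  proof -
    define g where "g y = 1 - bc y j" for y
    have gc: "continuous_on UNIV g" unfolding g_def by (intro continuous_intros bccont)
    have bcw: "bc (x j + s *\<^sub>R (w - x j)) k = (1 - s) * (if k = j then 1 else 0) + s * bc w k" if "k \<le> N" for s w k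
      using bch[OF that, of "x j" s w] bcx[OF j that] by simp
    have img: "(\<lambda>w. x j + s *\<^sub>R (w - x j)) ` D = {y\<in>D. g y \<le> s}" if s: "0 < s" "s < 1" for s
    proof (intro set_eqI iffI)
      fix y assume "y \<in> (\<lambda>w. x j + s *\<^sub>R (w - x j)) ` D"
      then obtain w where w: "w \<in> D" "y = x j + s *\<^sub>R (w - x j)" by blast
      have "\<forall>k\<le>N. 0 \<le> bc y k" using w Dchar[of w] bcw s by simp
      moreover have "g y \<le> s" using w Dchar[of w] bcw[OF j, of s w] s j unfolding g_def by simp
      ultimately show "y \<in> {y\<in>D. g y \<le> s}" using Dchar by simp
    next
      fix y assume y: "y \<in> {y\<in>D. g y \<le> s}"
      define w where "w = x j + (1/s) *\<^sub>R (y - x j)"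
      have yw: "y = x j + s *\<^sub>R (w - x j)" using s unfolding w_def by simp
      have "0 \<le> bc w k" if k: "k \<le> N" for k
      proof -
        have e: "bc w k = (1 - 1/s) * (if k = j then 1 else 0) + (1/s) * bc y k"
          using bcw[OF k, of "1/s" y] unfolding w_def .
        show ?thesis
        proof (cases "k = j")
          case True
          have "1 - s \<le> bc y j" using y unfolding g_def by simp
          then have "0 \<le> (bc y j - (1 - s)) / s" using s by simp
          also have "(bc y j - (1 - s)) / s = (1 - 1/s) + (1/s) * bc y j" using s by (simp add: field_simps)
          finally show ?thesis using e True by simp
        next
          case False then show ?thesis using e y Dchar k s by simp
        qed
      qed
      then have "w \<in> D" using Dchar by simp
      then show "y \<in> (\<lambda>w. x j + s *\<^sub>R (w - x j)) ` D" using yw by blast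
    qed
    have hom: "g (x j + s *\<^sub>R (y - x j)) = s * g y" if "0 < s" "s < 1" "y \<in> D" for s y
      using bcw[OF j, of s y] unfolding g_def by (simp add: algebra_simps)
    have rng: "0 \<le> g y \<and> g y \<le> 1" if "y \<in> D" for y
      using bcle1[OF that j] Dchar[of y] that j unfolding g_def by simp
    have G: "(real DIM(real^'n) + 1) * integral D g = real DIM(real^'n) * V"
      by (rule gauge_integral[OF bD gint[OF gc] oi img hom rng])
    have "integral D g = V - integral D (\<lambda>y. bc y j)"
      unfolding g_def
      using integral_diff[OF integrable_on_const[OF lD] cont_int[OF continuous_on_subset[OF bccont] cD]]
        lmeasure_integral[OF lD] V_def by simp
    then have "(real N + 1) * (V - integral D (\<lambda>y. bc y j)) = real N * V" using G dim by simp
    then have "(real N + 1) * integral D (\<lambda>y. bc y j) = V" by (simp add: algebra_simps)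
    then show ?thesis by (simp add: field_simps)
  qed
  define m where "m y = mm (bc y) N" for y
  have mc: "continuous_on UNIV m" unfolding m_def by (rule mm_cont[OF bccont])
  have intm: "integral D m = V / (real N + 1)^2"
  proof -
    define g where "g y = 1 - (real N + 1) * m y" for y
    have gc: "continuous_on UNIV g" unfolding g_def by (intro continuous_intros mc)
    have bcw: "bc (bb + s *\<^sub>R (w - bb)) k = (1 - s) / (real N + 1) + s * bc w k" if "k \<le> N" for s w k
      using bch[OF that, of bb s w] bcb[OF that] by simp
    have mw: "m (bb + s *\<^sub>R (w - bb)) = (1 - s) / (real N + 1) + s * m w" if "0 \<le> s" for s w
    proof -
      have "m (bb + s *\<^sub>R (w - bb)) = mm (\<lambda>k. (1 - s) / (real N + 1) + s * bc w k) N"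
        unfolding m_def by (rule mm_cong) (simp add: bcw)
      also have "\<dots> = (1 - s) / (real N + 1) + s * m w" unfolding m_def by (rule mm_affine[OF that])
      finally show ?thesis .
    qed
    have m0: "0 \<le> m y" if "y \<in> D" for y using that Dchar mm_ge_iff[of 0 "bc y" N] unfolding m_def by simp
    have m1: "(real N + 1) * m y \<le> 1" for y
      using mm_sum[of N "bc y"] bcp[of y] unfolding m_def by (simp add: add.commute)
    have img: "(\<lambda>w. bb + s *\<^sub>R (w - bb)) ` D = {y\<in>D. g y \<le> s}" if s: "0 < s" "s < 1" for s
    proof (intro set_eqI iffI)
      fix y assume "y \<in> (\<lambda>w. bb + s *\<^sub>R (w - bb)) ` D"
      then obtain w where w: "w \<in> D" "y = bb + s *\<^sub>R (w - bb)" by blast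
      have "\<forall>k\<le>N. 0 \<le> bc y k" using w Dchar[of w] bcw s by simp
      moreover have "g y \<le> s"
      proof -
        have "m y = (1 - s) / (real N + 1) + s * m w" using mw s w by simp
        then have "(real N + 1) * m y = (1 - s) + (real N + 1) * s * m w" by (simp add: field_simps)
        moreover have "0 \<le> (real N + 1) * s * m w" using m0[OF w(1)] s by simp
        ultimately show ?thesis unfolding g_def by simp
      qed
      ultimately show "y \<in> {y\<in>D. g y \<le> s}" using Dchar by simp
    next
      fix y assume y: "y \<in> {y\<in>D. g y \<le> s}"
      define w where "w = bb + (1/s) *\<^sub>R (y - bb)"
      have yw: "y = bb + s *\<^sub>R (w - bb)" using s unfolding w_def by simp
      have my: "(1 - s) / (real N + 1) \<le> m y" using y unfolding g_def by (simp add: field_simps)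
      have "0 \<le> bc w k" if k: "k \<le> N" for k
      proof -
        have e: "bc w k = (1 - 1/s) / (real N + 1) + (1/s) * bc y k"
          using bcw[OF k, of "1/s" y] unfolding w_def .
        have "(1 - s) / (real N + 1) \<le> bc y k" using my mm_le[OF k, of "bc y"] unfolding m_def by simp
        then have "0 \<le> (bc y k - (1 - s) / (real N + 1)) / s" using s by simp
        also have "(bc y k - (1 - s) / (real N + 1)) / s = (1 - 1/s) / (real N + 1) + (1/s) * bc y k"
        proof -
          have np: "0 < real N + 1" by simp
          show ?thesis using s np by (simp add: divide_simps)
        qed
        finally show ?thesis using e by simp
      qed
      then have "w \<in> D" using Dchar by simp
      then show "y \<in> (\<lambda>w. bb + s *\<^sub>R (w - bb)) ` D" using yw by blast
    qed
    have hom: "g (bb + s *\<^sub>R (y - bb)) = s * g y" if "0 < s" "s < 1" "y \<in> D" for s y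
      using mw[of s y] that unfolding g_def by (simp add: field_simps)
    have rng: "0 \<le> g y \<and> g y \<le> 1" if "y \<in> D" for y
      using m0[OF that] m1[of y] unfolding g_def by simp
    have G: "(real DIM(real^'n) + 1) * integral D g = real DIM(real^'n) * V"
      by (rule gauge_integral[OF bD gint[OF gc] oi img hom rng])
    have "integral D g = V - (real N + 1) * integral D m"
      unfolding g_def
      using integral_diff[OF integrable_on_const[OF lD] integrable_on_cmult_left[OF cont_int[OF continuous_on_subset[OF mc] cD]]]
        lmeasure_integral[OF lD] V_def by simp
    then have "(real N + 1) * (V - (real N + 1) * integral D m) = real N * V" using G dim by simp
    then have "(real N + 1)^2 * integral D m = V" by (simp add: algebra_simps power2_eq_square)
    then show ?thesis by (simp add: field_simps)
  qed
  have cvD: "convex_on D f" using cvx by (simp add: D_def N_def)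
  have xD: "x j \<in> D" if "j \<le> N" for j unfolding D_def by (rule hull_inc) (use that in auto)
  have bbD: "bb \<in> D" using Dchar bcb by simp
  have Npos: "0 < real N" using N1 by simp
  define A where "A = (\<Sum>j\<le>N. \<bar>f (x j)\<bar>)"
  have fxA: "f (x j) \<le> A" if "j \<le> N" for j
  proof -
    have "\<bar>f (x j)\<bar> \<le> A" unfolding A_def by (rule member_le_sum) (use that in auto)
    then show ?thesis by simp
  qed
  have fup: "f y \<le> A" if y: "y \<in> D" for y
  proof -
    have "f y = f (\<Sum>j\<le>N. bc y j *\<^sub>R x j)" using bcp[of y] by simp
    also have "\<dots> \<le> (\<Sum>j\<le>N. bc y j * f (x j))"
      by (rule convex_on_sum[OF _ _ cvD]) (use bcp Dchar y xD in auto)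
    also have "\<dots> \<le> (\<Sum>j\<le>N. bc y j * A)"
      by (rule sum_mono, rule mult_left_mono) (use fxA Dchar y in auto)
    also have "\<dots> = A" using bcp[of y] by (simp add: sum_distrib_right[symmetric])
    finally show ?thesis .
  qed
  have flo: "(real N + 1) * f bb - real N * A \<le> f y" if y: "y \<in> D" for y
  proof -
    define a where "a = 1 + 1 / real N"
    define y' where "y' = a *\<^sub>R bb + (1 - a) *\<^sub>R y"
    have "0 \<le> bc y' k" if k: "k \<le> N" for k
    proof -
      have "bc y' k = a * (1 / (real N + 1)) + (1 - a) * bc y k"
        using bcaff[OF k, of a bb y] bcb[OF k] unfolding y'_def by simp
      also have "\<dots> = (1 - bc y k) / real N" unfolding a_def using Npos by (simp add: field_simps)
      finally show ?thesis using bcle1[OF y k] Npos by simp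
    qed
    then have y'D: "y' \<in> D" using Dchar by simp
    define t where "t = 1 / (real N + 1)"
    have nz: "real N + real N * real N \<noteq> 0" using mult_pos_pos[OF Npos Npos] Npos by linarith
    have t01: "0 \<le> t" "t \<le> 1" unfolding t_def by auto
    have "(1 - t) *\<^sub>R y' + t *\<^sub>R y = ((1 - t) * a) *\<^sub>R bb + ((1 - t) * (1 - a) + t) *\<^sub>R y"
      unfolding y'_def by (simp add: algebra_simps)
    also have "(1 - t) * a = 1" unfolding t_def a_def using Npos nz by (simp add: field_simps)
    also have "(1 - t) * (1 - a) + t = 0" unfolding t_def a_def using Npos by (simp add: field_simps)
    finally have eb: "(1 - t) *\<^sub>R y' + t *\<^sub>R y = bb" by simp
    have "f bb \<le> (1 - t) * f y' + t * f y"
      using convex_onD[OF cvD t01 y'D y] eb by simp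
    also have "\<dots> \<le> (1 - t) * A + t * f y"
      using fup[OF y'D] t01 by (simp add: mult_left_mono)
    finally have "f bb \<le> (1 - t) * A + t * f y" .
    then have "(real N + 1) * f bb \<le> (real N + 1) * ((1 - t) * A + t * f y)" by simp
    also have "\<dots> = real N * A + f y"
    proof -
      have np: "real N + 1 \<noteq> 0" using Npos by linarith
      have e1: "(real N + 1) * (1 - t) = real N" unfolding t_def using np by (simp add: field_simps)
      have e2: "(real N + 1) * t = 1" unfolding t_def using np by simp
      have "(real N + 1) * ((1 - t) * A + t * f y) = ((real N + 1) * (1 - t)) * A + ((real N + 1) * t) * f y"
        by (simp add: algebra_simps)
      then show ?thesis using e1 e2 by simp
    qed
    finally show ?thesis by simp
  qed
  have fint: "f integrable_on D"
  proof (rule convex_bounded_integrable[OF cvD _ cD, where B="\<bar>(real N + 1) * f bb - real N * A\<bar> + \<bar>A\<bar>"])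
    show "convex D" by (simp add: D_def convex_convex_hull)
    show "\<bar>f y\<bar> \<le> \<bar>(real N + 1) * f bb - real N * A\<bar> + \<bar>A\<bar>" if "y \<in> D" for y
      using fup[OF that] flo[OF that] by linarith
  qed
  define Sf where "Sf = (\<Sum>j\<le>N. f (x j))"
  define R where "R y = (\<Sum>j\<le>N. bc y j * f (x j)) - m y * Sf + ((real N + 1) * f bb) * m y" for y
  have pw: "f y \<le> R y" if y: "y \<in> D" for y
  proof -
    define a where "a k = (if k \<le> N then bc y k - m y else (real N + 1) * m y)" for k
    define z where "z k = (if k \<le> N then x k else bb)" for k
    have sa1: "(\<Sum>k\<le>N. a k) = (\<Sum>k\<le>N. bc y k - m y)" by (rule sum.cong) (auto simp: a_def)
    have sa: "(\<Sum>k\<le>Suc N. a k) = 1"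
      using sa1 bcp[of y] by (simp add: a_def sum_subtractf algebra_simps)
    have anz: "0 \<le> a k" if "k \<in> {..Suc N}" for k
    proof (cases "k \<le> N")
      case True then show ?thesis using mm_le[OF True, of "bc y"] unfolding a_def m_def by simp
    next
      case False then show ?thesis using mm_ge_iff[of 0 "bc y" N] Dchar y unfolding a_def m_def by simp
    qed
    have zD: "z k \<in> D" for k using xD bbD by (simp add: z_def)
    have s1: "(\<Sum>k\<le>N. a k *\<^sub>R z k) = (\<Sum>k\<le>N. bc y k *\<^sub>R x k) - m y *\<^sub>R (\<Sum>k\<le>N. x k)"
    proof -
      have "(\<Sum>k\<le>N. a k *\<^sub>R z k) = (\<Sum>k\<le>N. bc y k *\<^sub>R x k - m y *\<^sub>R x k)"
        by (rule sum.cong) (auto simp: a_def z_def scaleR_diff_left)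
      then show ?thesis by (simp add: sum_subtractf scaleR_sum_right)
    qed
    have bbe: "((real N + 1) * m y) *\<^sub>R bb = m y *\<^sub>R (\<Sum>k\<le>N. x k)"
    proof -
      have np: "real N + 1 \<noteq> 0" using Npos by linarith
      show ?thesis unfolding bb_def using np by (simp add: scaleR_scaleR)
    qed
    have sz: "(\<Sum>k\<le>Suc N. a k *\<^sub>R z k) = y"
      using s1 bbe bcp[of y] by (simp add: a_def z_def)
    have s2: "(\<Sum>k\<le>N. a k * f (z k)) = (\<Sum>k\<le>N. bc y k * f (x k)) - m y * Sf"
    proof -
      have "(\<Sum>k\<le>N. a k * f (z k)) = (\<Sum>k\<le>N. bc y k * f (x k) - m y * f (x k))"
        by (rule sum.cong) (auto simp: a_def z_def algebra_simps)
      then show ?thesis by (simp add: sum_subtractf Sf_def sum_distrib_left)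
    qed
    have "f y = f (\<Sum>k\<le>Suc N. a k *\<^sub>R z k)" using sz by simp
    also have "\<dots> \<le> (\<Sum>k\<le>Suc N. a k * f (z k))"
      by (rule convex_on_sum[OF _ _ cvD]) (use sa anz zD in auto)
    also have "\<dots> = R y" using s2 unfolding R_def by (simp add: a_def z_def algebra_simps)
    finally show ?thesis .
  qed
  have hbc: "((\<lambda>y. bc y j) has_integral V / (real N + 1)) D" if "j \<le> N" for j
    using gint[OF bccont, of j] intbc[OF that] by simp
  have hm: "(m has_integral V / (real N + 1)^2) D" using gint[OF mc] intm by simp
  have h1: "((\<lambda>y. \<Sum>j\<le>N. bc y j * f (x j)) has_integral (\<Sum>j\<le>N. V / (real N + 1) * f (x j))) D"
    by (rule has_integral_sum) (use has_integral_mult_left[OF hbc] in auto)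
  have hR: "(R has_integral ((\<Sum>j\<le>N. V / (real N + 1) * f (x j)) - V / (real N + 1)^2 * Sf
      + ((real N + 1) * f bb) * (V / (real N + 1)^2))) D"
    unfolding R_def
    by (intro has_integral_add has_integral_diff h1 has_integral_mult_left has_integral_mult_right hm)
  have IfR: "integral D f \<le> (\<Sum>j\<le>N. V / (real N + 1) * f (x j)) - V / (real N + 1)^2 * Sf
      + ((real N + 1) * f bb) * (V / (real N + 1)^2)"
    by (rule has_integral_le[OF integrable_integral[OF fint] hR]) (use pw in auto)
  have Vpos: "0 < V"
  proof (rule ccontr)
    assume "\<not> 0 < V"
    then have "V = 0" using V_def measure_nonneg[of lebesgue D] by linarith
    then have negD: "negligible D" using negligible_iff_measure0[OF lD] V_def by simp
    have "card (x ` {..N}) = Suc DIM(real^'n)" using card_image[OF inj'] dim by simp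
    then have "interior D \<noteq> {}" using interior_convex_hull_eq_empty ind unfolding D_def by blast
    moreover have "negligible (interior D)" using negD interior_subset negligible_subset by blast
    ultimately show False using open_not_negligible[OF open_interior] by blast
  qed
  have main: "Avg f D \<le> 1 / (real N + 1) * f bb + real N / (real N + 1) * (Sf / (real N + 1))"
  proof -
    have np: "0 < real N + 1" by simp
    have "Avg f D = integral D f / V" unfolding Avg_def V_def by simp
    also have "\<dots> \<le> ((\<Sum>j\<le>N. V / (real N + 1) * f (x j)) - V / (real N + 1)^2 * Sf
      + ((real N + 1) * f bb) * (V / (real N + 1)^2)) / V"
      using IfR Vpos by (simp add: divide_right_mono)
    also have "\<dots> = 1 / (real N + 1) * f bb + real N / (real N + 1) * (Sf / (real N + 1))"
    proof -
      have "(\<Sum>j\<le>N. V / (real N + 1) * f (x j)) = V / (real N + 1) * Sf"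
        unfolding Sf_def by (simp add: sum_distrib_left)
      then show ?thesis using alg[OF Vpos, of "real N" Sf "f bb"] by simp
    qed
    finally show ?thesis .
  qed
  then show ?thesis unfolding D_def bb_def Sf_def N_def by simp
qed

end
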